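(* For all $x>0$ and $p\le 1$, $$H(x,x^p)^3\le x^{p+1}A(x,x^p)\le L(x,x^p)^3.$$
   Context: For $a,b>0$: $H(a,b)=\frac{2ab}{a+b}$, $A(a,b)=\frac{a+b}{2}$, and $L(a,b)=\frac{a-b}{\log a-\log b}$ for $a\ne b$, $L(a,a)=a$. *)

theory Defs
  imports Complex_Main
begin

definition Hmean :: "real \<Rightarrow> real \<Rightarrow> real" where
  "Hmean a b = 2 * a * b / (a + b)"

definition Amean :: "real \<Rightarrow> real \<Rightarrow> real" where
  "Amean a b = (a + b) / 2"

definition Lmean :: "real \<Rightarrow> real \<Rightarrow> real" where
  "Lmean a b = (if a = b then a else (a - b) / (ln a - ln b))"

end

theory Submission
  imports Defs
begin

lemma poly_aux: "(w::real) \<ge> 1 \<Longrightarrow> 2*w^6 - 3*w^4 + 1 \<ge> 0"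
proof -
  assume "w \<ge> 1"
  have "2*w^6 - 3*w^4 + 1 = (w^2-1)^2*(2*w^2+1)" by algebra
  also have "\<dots> \<ge> 0" by simp
  finally show ?thesis .
qed

lemma deriv_nonneg:
  fixes s :: real
  shows "cosh s * cosh s powr (-1/3) + sinh s * ((-1/3) * cosh s powr (-1/3 - 1) * sinh s) - 1 \<ge> 0"
proof -
  define c where "c = cosh s"
  have c1: "c \<ge> 1" unfolding c_def by (rule cosh_real_ge_1)
  define w where "w = c powr (1/3)"
  have w1: "w \<ge> 1" unfolding w_def using c1 by (simp add: ge_one_powr_ge_zero)
  have cw: "c = w^3" unfolding w_def using c1
    by (simp add: powr_realpow[symmetric] powr_powr)
  have a: "c powr (-1/3) = 1/w" unfolding w_def using c1 by (simp add: powr_minus_divide)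
  have b: "c powr (-1/3 - 1) = 1/w^4"
  proof -
    have n: "-1/3 - 1 = (-1/3) + (-1::real)" by simp
    have q: "c powr (-1/3 - 1) = c powr (-1/3) * c powr (-1)" by (simp only: n powr_add)
    have "c powr (-1) = 1/c" using c1 by (simp add: powr_minus_divide)
    hence "c powr (-1/3 - 1) = c powr (-1/3) / c" using q by simp
    thus ?thesis using a cw by (simp add: power_eq_if)
  qed
  have sh: "sinh s * sinh s = c^2 - 1" unfolding c_def using cosh_square_eq[of s] by (simp add: power2_eq_square)
  have "cosh s * cosh s powr (-1/3) + sinh s * ((-1/3) * cosh s powr (-1/3 - 1) * sinh s) - 1
      = c * (1/w) - (sinh s * sinh s) / (3*w^4) - 1"
    unfolding c_def[symmetric] a b by (simp add: algebra_simps)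
  also have "\<dots> = w^3 * (1/w) - ((w^3)^2 - 1) / (3*w^4) - 1" unfolding sh cw ..
  also have "\<dots> = w^2 - (w^6 - 1)/(3*w^4) - 1" using w1
    by (simp add: power_mult[symmetric] eval_nat_numeral)
  also have "\<dots> = (2*w^6 - 3*w^4 + 1)/(3*w^4)" using w1 by (simp add: field_simps power_eq_if)
  also have "\<dots> \<ge> 0" using poly_aux[OF w1] w1 by simp
  finally show ?thesis .
qed

lemma keyK:
  fixes s :: real assumes "s \<ge> 0"
  shows "s \<le> sinh s * cosh s powr (-1/3)"
proof -
  let ?f = "\<lambda>s::real. sinh s * cosh s powr (-1/3) - s"
  have "?f 0 \<le> ?f s"
  proof (rule DERIV_nonneg_imp_nondecreasing[OF assms])
    fix x :: real
    show "\<exists>y. DERIV ?f x :> y \<and> y \<ge> 0"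
      apply (rule exI, rule conjI)
       apply (rule derivative_eq_intros refl | simp)+
      using deriv_nonneg[of x] by (simp add: mult_ac)
  qed
  thus ?thesis by simp
qed

lemma keyK3:
  fixes s :: real assumes "s \<ge> 0"
  shows "s^3 * cosh s \<le> sinh s ^ 3"
proof -
  have "s^3 \<le> (sinh s * cosh s powr (-1/3))^3"
    using keyK[OF assms] assms by (rule power_mono)
  also have "\<dots> = sinh s ^3 * (cosh s powr (-1/3))^3" by (simp add: power_mult_distrib)
  also have "(cosh s powr (-1/3))^3 = cosh s powr (-1)"
    by (subst powr_power) simp_all
  also have "cosh s powr (-1) = 1 / cosh s"
    by (simp add: powr_minus_divide)
  finally have "s^3 \<le> sinh s ^3 / cosh s" by simp
  thus ?thesis by (simp add: field_simps)
qed

lemma keyL: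
  fixes u v :: real assumes "u > v" "v > 0"
  shows "u^2*v^2*(u^2+v^2)/2 \<le> ((u^2-v^2)/(ln (u^2) - ln (v^2)))^3"
proof -
  define s where "s = ln u - ln v"
  have u0: "u > 0" using assms by simp
  have s0: "s > 0" using assms unfolding s_def by simp
  have lnq: "ln (u^2) - ln (v^2) = 2*s" using assms unfolding s_def by (simp add: ln_realpow)
  have es: "exp s = u/v" using assms unfolding s_def by (simp add: exp_diff)
  have ems: "exp (-s) = v/u" using es assms by (simp add: exp_minus)
  have sh: "sinh s = (u/v - v/u)/2" by (simp add: sinh_def es ems)
  have ch: "cosh s = (u/v + v/u)/2" by (simp add: cosh_def es ems)
  have sh2: "sinh s = (u^2-v^2)/(2*u*v)" unfolding sh using u0 assms(2)
    by (simp add: field_simps power2_eq_square)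
  have ch2: "cosh s = (u^2+v^2)/(2*u*v)" unfolding ch using u0 assms(2)
    by (simp add: field_simps power2_eq_square)
  define P where "P = (u^2+v^2)/(2*u*v)"
  define Q where "Q = (u^2-v^2)/(2*u*v)"
  have k: "s^3 * P \<le> Q^3"
    using keyK3[of s] s0 sh2 ch2 unfolding P_def Q_def by simp
  have uv: "u*v > 0" using u0 assms by simp
  have v0: "v > 0" using assms by simp
  have e1: "u^2*v^2*(u^2+v^2)/2 = (u*v)^3 * P"
    unfolding P_def using u0 v0 by (simp add: field_simps power2_eq_square power3_eq_cube)
  have e2: "(u^2-v^2)/(2*s) = (u*v) * Q / s"
    unfolding Q_def using u0 v0 s0 by (simp add: field_simps)
  have e3: "((u*v) * Q / s)^3 = (u*v)^3 * (Q^3/s^3)"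
    by (simp add: power_mult_distrib power_divide)
  have "P \<le> Q^3/s^3" using k s0 by (simp add: pos_le_divide_eq mult.commute)
  hence "(u*v)^3 * P \<le> (u*v)^3 * (Q^3/s^3)" using uv by (intro mult_left_mono) auto
  thus ?thesis unfolding lnq e1 e2 e3 .
qed

lemma Lpart:
  fixes a b :: real assumes "a > 0" "b > 0"
  shows "a*b*Amean a b \<le> Lmean a b ^ 3"
proof (cases "a = b")
  case True thus ?thesis by (simp add: Amean_def Lmean_def eval_nat_numeral)
next
  case False
  have gen: "x*y*(x+y)/2 \<le> ((x-y)/(ln x - ln y))^3" if "x > y" "y > 0" for x y :: real
  proof -
    have "sqrt x > sqrt y" "sqrt y > 0" using that by auto
    from keyL[OF this] show ?thesis using that by simp
  qed
  have L: "Lmean a b = (a-b)/(ln a - ln b)" using False by (simp add: Lmean_def)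
  show ?thesis
  proof (cases "a > b")
    case True
    have G: "a*b*(a+b)/2 \<le> ((a-b)/(ln a - ln b))^3" using gen[OF True assms(2)] by simp
    have "a*b*Amean a b = a*b*(a+b)/2" by (simp add: Amean_def)
    also note G
    also have "((a-b)/(ln a - ln b))^3 = Lmean a b ^ 3" using L by simp
    finally show ?thesis .
  next
    case f: False
    hence ba: "b > a" using False by simp
    have G: "b*a*(b+a)/2 \<le> ((b-a)/(ln b - ln a))^3" using gen[OF ba assms(1)] by simp
    have e: "(a-b)/(ln a - ln b) = (b-a)/(ln b - ln a)"
      by (metis minus_diff_eq minus_divide_divide)
    have "a*b*Amean a b = b*a*(b+a)/2" by (simp add: Amean_def algebra_simps)
    also note G
    also have "((b-a)/(ln b - ln a))^3 = Lmean a b ^ 3" using L e by simp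
    finally show ?thesis .
  qed
qed

lemma Hpart:
  fixes a b :: real assumes "a > 0" "b > 0"
  shows "Hmean a b ^ 3 \<le> a*b*Amean a b"
proof -
  have ab: "a + b > 0" using assms by simp
  have k: "16*a^2*b^2 \<le> (a+b)^4"
  proof -
    have "(a+b)^4 - 16*a^2*b^2 = (a-b)^2*((a+b)^2+4*a*b)" by algebra
    also have "\<dots> \<ge> 0" using assms by simp
    finally show ?thesis by simp
  qed
  have h1: "Hmean a b ^ 3 = (2*a*b)^3 / (a+b)^3"
    unfolding Hmean_def by (simp add: power_divide)
  have d: "(a+b)^3 > 0" using ab by simp
  have h2: "(2*a*b)^3 / (a+b)^3 = (a*b) * (16*a^2*b^2) / (2*(a+b)^3)"
    using d by (simp add: field_simps eval_nat_numeral del: power_add)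
  have "Hmean a b ^ 3 = (a*b) * (16*a^2*b^2) / (2*(a+b)^3)" using h1 h2 by simp
  also have "\<dots> \<le> (a*b) * (a+b)^4 / (2*(a+b)^3)"
    using k assms ab by (intro divide_right_mono mult_left_mono) auto
  also have "\<dots> = a*b*Amean a b"
  proof -
    have p4: "(a+b)^4 = (a+b)^3*(a+b)" by (simp add: eval_nat_numeral)
    have g: "(a*b) * (D*(a+b)) / (2*D) = a*b*((a+b)/2)" if "D > 0" for D :: real
      using that by (simp add: field_simps)
    show ?thesis unfolding p4 Amean_def using g[OF d] .
  qed
  finally show ?thesis .
qed

theorem mainTheorem8:
  fixes x p :: real
  assumes "x > 0" and "p \<le> 1"
  shows "Hmean x (x powr p) ^ 3 \<le> x powr (p + 1) * Amean x (x powr p)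
       \<and> x powr (p + 1) * Amean x (x powr p) \<le> Lmean x (x powr p) ^ 3"
proof -
  have e: "x powr (p + 1) = x * x powr p" using assms(1) by (simp add: powr_add)
  have b: "x powr p > 0" using assms(1) by simp
  show ?thesis unfolding e using Hpart[OF assms(1) b] Lpart[OF assms(1) b] by simp
qed

end
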